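(* Consider nonparametric generalized regression with fixed design: fixed inputs $x^{(1)},\dots,x^{(n)}\in\mathbb{R}^p$, independent responses $y^{(i)}\sim\mathcal{D}_i$, sufficient statistic $t(y)\in\mathbb{R}$, log-partition $\log\mathcal{Z}(\nu)$ with $\mathcal{Z}(\nu)=\int\exp(t(y)\nu)\,dy$. Let $\varphi_1,\dots,\varphi_{q_n}:\mathbb{R}\to\mathbb{R}$ be orthonormal functions and define the $m=q_np$ basis functions $\phi_j(x)=\varphi_k(x_l)$, $k=1,\dots,q_n$, $l=1,\dots,p$, with $|\phi_j(x^{(i)})|\le B$ for all $i,j$. Predictors are $\theta(x)=\sum_{j=1}^m\nu^{(\theta)}_j\phi_j(x)$ with norm $\|\theta\|=\|\nu^{(\theta)}\|_1$. Let $\eta^{(i)}$ be i.i.d. from $\mathcal{Q}$ independent of the responses and $\psi$ unbiased: $\mathbb{E}_\eta[\psi(y,\eta)]=t(y)$. Define $\widehat{\mathcal{L}}_\eta(\theta)=\frac1n\sum_i\big(-\psi(y^{(i)},\eta^{(i)})\theta(x^{(i)})+\log\mathcal{Z}(\theta(x^{(i)}))\big)$, $\widehat{\mathcal{L}}$ the same with $t(y^{(i)})$, $\mathcal{L}_\eta=\mathbb{E}[\widehat{\mathcal{L}}_\eta]$, $\mathcal{L}=\mathbb{E}[\widehat{\mathcal{L}}]$. Then: (i) $\mathcal{L}_\eta(\theta)=\mathcal{L}(\theta)$ for all $\theta$ (so $\varepsilon'_n=0$); (ii) if each $t(y^{(i)})$ is sub-Gaussian with parameter $\sigma_y$ and $\psi(y,\eta)$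 is sub-Gaussian with parameter $\sigma_\eta$ for each fixed $y$, then with $\sigma^2=\sigma_y^2+\sigma_\eta^2$, with probability at least $1-\delta$, for all $\theta$, $$|\widehat{\mathcal{L}}_\eta(\theta)-\mathcal{L}_\eta(\theta)|\le\sigma B\sqrt{\tfrac2n\big(\log p+\log q_n+\log\tfrac2\delta\big)}\ \|\theta\|;$$ in particular, with $q_n=\exp(n^{2\beta})$, $\beta\in(0,1/2)$, the rate is $O\big(\sigma n^{\beta-1/2}\sqrt{\log(1/\delta)}\big)$ (for fixed $p$, $B$); (iii) if instead $\mathrm{Var}(t(y^{(i)}))\le\sigma_y^2$ and $\mathrm{Var}_\eta(\psi(y,\eta))\le\sigma_\eta^2$ for each fixed $y$, then with $\sigma^2=\sigma_y^2+\sigma_\eta^2$, with probability at least $1-\delta$, for all $\theta$, $|\widehat{\mathcal{L}}_\eta(\theta)-\mathcal{L}_\eta(\theta)|\le\sigma B\sqrt{\tfrac{q_np}{n\delta}}\,\|\theta\|$; in particular with $q_n=n^{2\beta}$, $\beta\in(0,1/2)$, the rate is $O\big(\sigma n^{\beta-1/2}\sqrt{1/\delta}\big)$.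
   Context: A real random variable $Y$ is sub-Gaussian with parameter $s$ if $\mathbb{E}[\exp(\lambda(Y-\mathbb{E}Y))]\le\exp(s^2\lambda^2/2)$ for all $\lambda\in\mathbb{R}$. *)

theory Defs
  imports "HOL-Probability.Probability"
begin

definition subgaussian :: "'a measure \<Rightarrow> ('a \<Rightarrow> real) \<Rightarrow> real \<Rightarrow> bool" where
  "subgaussian M Y s \<longleftrightarrow> integrable M Y \<and>
     (\<forall>l::real. integrable M (\<lambda>\<omega>. exp (l * (Y \<omega> - (\<integral>w. Y w \<partial>M)))) \<and>
        (\<integral>\<omega>. exp (l * (Y \<omega> - (\<integral>w. Y w \<partial>M))) \<partial>M) \<le> exp (s\<^sup>2 * l\<^sup>2 / 2))"

definition variance_le :: "'a measure \<Rightarrow> ('a \<Rightarrow> real) \<Rightarrow> real \<Rightarrow> bool" where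
  "variance_le M Y s \<longleftrightarrow> integrable M Y \<and> integrable M (\<lambda>\<omega>. (Y \<omega>)\<^sup>2) \<and>
     (\<integral>\<omega>. (Y \<omega> - (\<integral>w. Y w \<partial>M))\<^sup>2 \<partial>M) \<le> s\<^sup>2"

definition orthonormal_funs :: "(nat \<Rightarrow> real \<Rightarrow> real) \<Rightarrow> nat \<Rightarrow> bool" where
  "orthonormal_funs \<phi> q \<longleftrightarrow> (\<forall>k<q. \<forall>l<q.
     integrable lborel (\<lambda>x. \<phi> k x * \<phi> l x) \<and>
     (\<integral>x. \<phi> k x * \<phi> l x \<partial>lborel) = (if k = l then 1 else 0))"

text \<open>Basis function phi_(k,l)(x) = varphi_k(x_l); a point of R^p is x :: nat => real
  (coordinates 0..p-1 used).  Coefficients nu are indexed by (k,l), k<q, l<p (m = q p).\<close>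
definition basis_fun :: "(nat \<Rightarrow> real \<Rightarrow> real) \<Rightarrow> nat \<times> nat \<Rightarrow> (nat \<Rightarrow> real) \<Rightarrow> real" where
  "basis_fun \<phi> j x = \<phi> (fst j) (x (snd j))"

definition predictor :: "(nat \<Rightarrow> real \<Rightarrow> real) \<Rightarrow> nat \<Rightarrow> nat \<Rightarrow> (nat \<times> nat \<Rightarrow> real)
    \<Rightarrow> (nat \<Rightarrow> real) \<Rightarrow> real" where
  "predictor \<phi> q p \<nu> x = (\<Sum>j\<in>{..<q} \<times> {..<p}. \<nu> j * basis_fun \<phi> j x)"

definition pred_norm :: "nat \<Rightarrow> nat \<Rightarrow> (nat \<times> nat \<Rightarrow> real) \<Rightarrow> real" where
  "pred_norm q p \<nu> = (\<Sum>j\<in>{..<q} \<times> {..<p}. \<bar>\<nu> j\<bar>)"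

definition logZ :: "(real \<Rightarrow> real) \<Rightarrow> real \<Rightarrow> real" where
  "logZ t v = ln (\<integral>y. exp (t y * v) \<partial>lborel)"

definition Lhat_eta :: "(real \<Rightarrow> real) \<Rightarrow> (real \<Rightarrow> 'e \<Rightarrow> real) \<Rightarrow> (nat \<Rightarrow> real \<Rightarrow> real)
    \<Rightarrow> nat \<Rightarrow> nat \<Rightarrow> nat \<Rightarrow> (nat \<Rightarrow> nat \<Rightarrow> real) \<Rightarrow> (nat \<Rightarrow> 'a \<Rightarrow> real) \<Rightarrow> (nat \<Rightarrow> 'a \<Rightarrow> 'e)
    \<Rightarrow> (nat \<times> nat \<Rightarrow> real) \<Rightarrow> 'a \<Rightarrow> real" where
  "Lhat_eta t \<psi> \<phi> q p n x Y Eta \<nu> \<omega> = (1 / real n) * (\<Sum>i<n.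
      - \<psi> (Y i \<omega>) (Eta i \<omega>) * predictor \<phi> q p \<nu> (x i) + logZ t (predictor \<phi> q p \<nu> (x i)))"

definition Lhat :: "(real \<Rightarrow> real) \<Rightarrow> (nat \<Rightarrow> real \<Rightarrow> real)
    \<Rightarrow> nat \<Rightarrow> nat \<Rightarrow> nat \<Rightarrow> (nat \<Rightarrow> nat \<Rightarrow> real) \<Rightarrow> (nat \<Rightarrow> 'a \<Rightarrow> real)
    \<Rightarrow> (nat \<times> nat \<Rightarrow> real) \<Rightarrow> 'a \<Rightarrow> real" where
  "Lhat t \<phi> q p n x Y \<nu> \<omega> = (1 / real n) * (\<Sum>i<n.
      - t (Y i \<omega>) * predictor \<phi> q p \<nu> (x i) + logZ t (predictor \<phi> q p \<nu> (x i)))"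

end

theory Submission
  imports Defs
begin



lemma Int_stable_vimage: "Int_stable {f -` A \<inter> S | A. A \<in> sets N}"
  unfolding Int_stable_def
  by (auto, rule_tac x="A \<inter> Aa" in exI, auto)

lemma int_sq_shift:
  fixes f :: "'b \<Rightarrow> real"
  assumes "integrable K f" "integrable K (\<lambda>x. (f x)\<^sup>2)" "finite_measure K"
  shows "integrable K (\<lambda>x. (f x - c)\<^sup>2)"
proof -
  have "(\<lambda>x. (f x - c)\<^sup>2) = (\<lambda>x. (f x)\<^sup>2 - 2 * c * f x + c\<^sup>2)"
    by (auto simp: power2_diff)
  moreover have "integrable K (\<lambda>x. (f x)\<^sup>2 - 2 * c * f x + c\<^sup>2)"
    using assms by (intro Bochner_Integration.integrable_add Bochner_Integration.integrable_diff integrable_mult_right finite_measure.integrable_const) auto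
  ultimately show ?thesis by simp
qed

locale setup9 = prob_space M
  for M :: "'a measure" and N :: "'e measure" and Q :: "'e measure" and n :: nat
    and Y :: "nat \<Rightarrow> 'a \<Rightarrow> real" and Eta :: "nat \<Rightarrow> 'a \<Rightarrow> 'e"
    and t :: "real \<Rightarrow> real" and \<psi> :: "real \<Rightarrow> 'e \<Rightarrow> real" +
  assumes n: "n > 0"
    and Y_meas: "\<And>i. i < n \<Longrightarrow> Y i \<in> borel_measurable M"
    and Eta_meas: "\<And>i. i < n \<Longrightarrow> Eta i \<in> measurable M N"
    and t_meas: "t \<in> borel_measurable borel"
    and psi_meas: "(\<lambda>(y, e). \<psi> y e) \<in> borel_measurable (borel \<Otimes>\<^sub>M N)"
    and indep: "indep_sets
          (\<lambda>k. case k of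
              Inl i \<Rightarrow> {Y i -` A \<inter> space M | A. A \<in> sets borel}
            | Inr i \<Rightarrow> {Eta i -` A \<inter> space M | A. A \<in> sets N})
          ({..<n} <+> {..<n})"
    and Eta_distr: "\<And>i. i < n \<Longrightarrow> distr M N (Eta i) = Q"
    and unbiased: "\<And>y. integrable Q (\<psi> y) \<and> (\<integral>e. \<psi> y e \<partial>Q) = t y"
    and psi_int: "\<And>i. i < n \<Longrightarrow> integrable M (\<lambda>\<omega>. \<psi> (Y i \<omega>) (Eta i \<omega>))"
begin

definition E :: "nat + nat \<Rightarrow> 'a set set" where
  "E k = (case k of
              Inl i \<Rightarrow> {Y i -` A \<inter> space M | A. A \<in> sets borel}
            | Inr i \<Rightarrow> {Eta i -` A \<inter> space M | A. A \<in> sets N})"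

lemma indepE: "indep_sets E ({..<n} <+> {..<n})"
  using indep unfolding E_def .

lemma E_stable: "Int_stable (E k)"
  unfolding E_def by (cases k) (auto intro: Int_stable_vimage)

definition F :: "nat \<Rightarrow> 'a set set" where
  "F i = sigma_sets (space M) (\<Union>k\<in>{Inl i, Inr i}. E k)"

lemma indepF: "indep_sets F {..<n}"
proof -
  have "indep_sets (\<lambda>j. sigma_sets (space M) (\<Union>k\<in>{Inl j, Inr j}. E k)) {..<n}"
  proof (rule indep_sets_collect_sigma)
    have "(\<Union>j\<in>{..<n}. {Inl j, Inr j}) = {..<n} <+> {..<n}" by auto
    then show "indep_sets E (\<Union>j\<in>{..<n}. {Inl j, Inr j})" using indepE by simp
    show "Int_stable (E i)" for i by (rule E_stable)
    show "disjoint_family_on (\<lambda>j. {Inl j, Inr j}) {..<n}"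
      unfolding disjoint_family_on_def by auto
  qed
  then show ?thesis unfolding F_def .
qed

lemma E_sub: "k \<in> {Inl i, Inr i} \<Longrightarrow> E k \<subseteq> Pow (space M)"
  unfolding E_def by auto

lemma pair_meas_F:
  assumes i: "i < n" and g: "(\<lambda>(y, e). g y e) \<in> borel_measurable (borel \<Otimes>\<^sub>M N)"
  shows "(\<lambda>\<omega>. g (Y i \<omega>) (Eta i \<omega>)) \<in> borel_measurable (sigma (space M) (\<Union>k\<in>{Inl i, Inr i}. E k))"
proof -
  let ?S = "sigma (space M) (\<Union>k\<in>{Inl i, Inr i}. E k)"
  have sub: "(\<Union>k\<in>{Inl i, Inr i}. E k) \<subseteq> Pow (space M)" using E_sub by blast
  have sp: "space ?S = space M" using sub by simp
  have ss: "sets ?S = sigma_sets (space M) (\<Union>k\<in>{Inl i, Inr i}. E k)" using sub by simp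
  have Ym: "Y i \<in> borel_measurable ?S"
  proof (rule measurableI)
    fix A :: "real set" assume "A \<in> sets borel"
    then have "Y i -` A \<inter> space M \<in> E (Inl i)" unfolding E_def by auto
    then show "Y i -` A \<inter> space ?S \<in> sets ?S" unfolding sp ss by auto
  qed auto
  have Em: "Eta i \<in> measurable ?S N"
  proof (rule measurableI)
    fix x assume "x \<in> space ?S" then show "Eta i x \<in> space N"
      using measurable_space[OF Eta_meas[OF i]] sp by auto
  next
    fix A assume "A \<in> sets N"
    then have "Eta i -` A \<inter> space M \<in> E (Inr i)" unfolding E_def by auto
    then show "Eta i -` A \<inter> space ?S \<in> sets ?S" unfolding sp ss by auto
  qed
  have "(\<lambda>\<omega>. (Y i \<omega>, Eta i \<omega>)) \<in> measurable ?S (borel \<Otimes>\<^sub>M N)"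
    using Ym Em by (rule measurable_Pair)
  from measurable_compose[OF this g] show ?thesis by simp
qed

lemma indep_pairs:
  assumes g: "(\<lambda>(y, e). g y e) \<in> borel_measurable (borel \<Otimes>\<^sub>M N)"
  shows "indep_vars (\<lambda>_. borel) (\<lambda>i \<omega>. g (Y i \<omega>) (Eta i \<omega>)) {..<n}"
  unfolding indep_vars_def
proof
  show "\<forall>i\<in>{..<n}. random_variable borel (\<lambda>\<omega>. g (Y i \<omega>) (Eta i \<omega>))"
  proof
    fix i assume "i \<in> {..<n}"
    then have i: "i < n" by simp
    have "(\<lambda>\<omega>. (Y i \<omega>, Eta i \<omega>)) \<in> measurable M (borel \<Otimes>\<^sub>M N)"
      using Y_meas[OF i] Eta_meas[OF i] by (rule measurable_Pair)
    from measurable_compose[OF this g] show "random_variable borel (\<lambda>\<omega>. g (Y i \<omega>) (Eta i \<omega>))" by simp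
  qed
  show "indep_sets (\<lambda>i. sigma_sets (space M) {(\<lambda>\<omega>. g (Y i \<omega>) (Eta i \<omega>)) -` A \<inter> space M |A. A \<in> sets borel}) {..<n}"
  proof (rule indep_sets_mono_sets[OF indepF])
    fix i assume "i \<in> {..<n}"
    then have i: "i < n" by simp
    let ?S = "sigma (space M) (\<Union>k\<in>{Inl i, Inr i}. E k)"
    have sub: "(\<Union>k\<in>{Inl i, Inr i}. E k) \<subseteq> Pow (space M)" using E_sub by blast
    have sp: "space ?S = space M" using sub by simp
    have ss: "sets ?S = F i" using sub unfolding F_def by simp
    have sa: "sigma_algebra (space M) (F i)" unfolding F_def
      using sub by (rule sigma_algebra_sigma_sets)
    have "{(\<lambda>\<omega>. g (Y i \<omega>) (Eta i \<omega>)) -` A \<inter> space M |A. A \<in> sets borel} \<subseteq> F i"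
      using measurable_sets[OF pair_meas_F[OF i g]] unfolding sp ss by auto
    then show "sigma_sets (space M) {(\<lambda>\<omega>. g (Y i \<omega>) (Eta i \<omega>)) -` A \<inter> space M |A. A \<in> sets borel} \<subseteq> F i"
      using sigma_algebra.sigma_sets_subset[OF sa] by blast
  qed
qed

lemma indep_YEta:
  assumes i: "i < n" and a: "a \<in> sets borel" and b: "b \<in> sets N"
  shows "prob (Y i -` a \<inter> space M \<inter> (Eta i -` b \<inter> space M)) = prob (Y i -` a \<inter> space M) * prob (Eta i -` b \<inter> space M)"
proof -
  have I2: "indep_sets E {Inl i, Inr i}"
    by (rule indep_sets_mono_index[OF _ indepE]) (use i in auto)
  let ?a = "Y i -` a \<inter> space M" and ?b = "Eta i -` b \<inter> space M"
  have "prob (\<Inter>k\<in>{Inl i, Inr i}. (\<lambda>k. if k = Inl i then ?a else ?b) k)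
      = (\<Prod>k\<in>{Inl i, Inr i}. prob ((\<lambda>k. if k = Inl i then ?a else ?b) k))"
    by (rule indep_setsD[OF I2]) (use a b in \<open>auto simp: E_def\<close>)
  then show ?thesis by (simp add: Int_commute)
qed

lemma distr_pair:
  assumes i: "i < n"
  shows "distr M borel (Y i) \<Otimes>\<^sub>M Q = distr M (borel \<Otimes>\<^sub>M N) (\<lambda>\<omega>. (Y i \<omega>, Eta i \<omega>))"
proof -
  note rvs = Y_meas[OF i] Eta_meas[OF i]
  have XY: "(\<lambda>\<omega>. (Y i \<omega>, Eta i \<omega>)) \<in> measurable M (borel \<Otimes>\<^sub>M N)"
    using rvs by (rule measurable_Pair)
  let ?S = "distr M borel (Y i)" and ?T = "distr M N (Eta i)"
  interpret X: prob_space ?S by (rule prob_space_distr) (rule rvs)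
  interpret Y: prob_space ?T by (rule prob_space_distr) (rule rvs)
  interpret XY: pair_prob_space ?S ?T ..
  have "?S \<Otimes>\<^sub>M ?T = distr M (borel \<Otimes>\<^sub>M N) (\<lambda>\<omega>. (Y i \<omega>, Eta i \<omega>))"
  proof (rule pair_measure_eqI)
    show "sigma_finite_measure ?S" ..
    show "sigma_finite_measure ?T" ..
    fix A B assume A: "A \<in> sets ?S" and B: "B \<in> sets ?T"
    have "emeasure (distr M (borel \<Otimes>\<^sub>M N) (\<lambda>\<omega>. (Y i \<omega>, Eta i \<omega>))) (A \<times> B) = emeasure M ((\<lambda>x. (Y i x, Eta i x)) -` (A \<times> B) \<inter> space M)"
      using A B by (intro emeasure_distr[OF XY]) auto
    also have "(\<lambda>x. (Y i x, Eta i x)) -` (A \<times> B) \<inter> space M = (Y i -` A \<inter> space M) \<inter> (Eta i -` B \<inter> space M)"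
      by auto
    also have "emeasure M \<dots> = emeasure M (Y i -` A \<inter> space M) * emeasure M (Eta i -` B \<inter> space M)"
      using indep_YEta[OF i, of A B] A B
      by (simp add: emeasure_eq_measure measure_nonneg ennreal_mult)
    also have "\<dots> = emeasure ?S A * emeasure ?T B"
      using rvs A B by (simp add: emeasure_distr)
    finally show "emeasure ?S A * emeasure ?T B = emeasure (distr M (borel \<Otimes>\<^sub>M N) (\<lambda>\<omega>. (Y i \<omega>, Eta i \<omega>))) (A \<times> B)" by simp
  qed simp
  then show ?thesis using Eta_distr[OF i] by simp
qed


lemma Q_prob: "prob_space Q"
  using Eta_distr[OF n] prob_space_distr[OF Eta_meas[OF n]] by simp

lemma nn_pair:
  assumes i: "i < n" and f: "f \<in> borel_measurable (borel \<Otimes>\<^sub>M N)"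
  shows "(\<integral>\<^sup>+\<omega>. f (Y i \<omega>, Eta i \<omega>) \<partial>M) = (\<integral>\<^sup>+y. \<integral>\<^sup>+e. f (y, e) \<partial>Q \<partial>distr M borel (Y i))"
proof -
  interpret Qp: prob_space Q by (rule Q_prob)
  have XY: "(\<lambda>\<omega>. (Y i \<omega>, Eta i \<omega>)) \<in> measurable M (borel \<Otimes>\<^sub>M N)"
    using Y_meas[OF i] Eta_meas[OF i] by (rule measurable_Pair)
  have sQ: "sets Q = sets N" using Eta_distr[OF i] by auto
  have f': "f \<in> borel_measurable (distr M borel (Y i) \<Otimes>\<^sub>M Q)"
  proof -
    have "sets (distr M borel (Y i) \<Otimes>\<^sub>M Q) = sets (borel \<Otimes>\<^sub>M N)"
      by (rule sets_pair_measure_cong) (simp_all add: sQ)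
    then show ?thesis using f measurable_cong_sets by blast
  qed
  have "(\<integral>\<^sup>+\<omega>. f (Y i \<omega>, Eta i \<omega>) \<partial>M) = integral\<^sup>N (distr M (borel \<Otimes>\<^sub>M N) (\<lambda>\<omega>. (Y i \<omega>, Eta i \<omega>))) f"
    by (rule nn_integral_distr[OF XY, symmetric]) (use f in simp)
  also have "\<dots> = integral\<^sup>N (distr M borel (Y i) \<Otimes>\<^sub>M Q) f" using distr_pair[OF i] by simp
  also have "\<dots> = (\<integral>\<^sup>+y. \<integral>\<^sup>+e. f (y, e) \<partial>Q \<partial>distr M borel (Y i))"
    by (rule Qp.nn_integral_fst[OF f', symmetric])
  finally show ?thesis .
qed

lemma mean_eq:
  assumes i: "i < n"
  shows "integrable M (\<lambda>\<omega>. t (Y i \<omega>))"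
    and "(\<integral>\<omega>. \<psi> (Y i \<omega>) (Eta i \<omega>) \<partial>M) = (\<integral>\<omega>. t (Y i \<omega>) \<partial>M)"
proof -
  interpret Qp: prob_space Q by (rule Q_prob)
  interpret PY: prob_space "distr M borel (Y i)" by (rule prob_space_distr[OF Y_meas[OF i]])
  interpret PQ: pair_sigma_finite "distr M borel (Y i)" Q ..
  have XY: "(\<lambda>\<omega>. (Y i \<omega>, Eta i \<omega>)) \<in> measurable M (borel \<Otimes>\<^sub>M N)"
    using Y_meas[OF i] Eta_meas[OF i] by (rule measurable_Pair)
  have "integrable (distr M (borel \<Otimes>\<^sub>M N) (\<lambda>\<omega>. (Y i \<omega>, Eta i \<omega>))) (\<lambda>(y, e). \<psi> y e)"
    using psi_int[OF i] by (subst integrable_distr_eq[OF XY psi_meas]) simp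
  then have int: "integrable (distr M borel (Y i) \<Otimes>\<^sub>M Q) (\<lambda>(y, e). \<psi> y e)"
    using distr_pair[OF i] by simp
  have teq: "(\<lambda>y. \<integral>e. \<psi> y e \<partial>Q) = t" using unbiased by auto
  have "integrable (distr M borel (Y i)) t" using PQ.integrable_fst[OF int] teq by simp
  then show ti: "integrable M (\<lambda>\<omega>. t (Y i \<omega>))"
    using integrable_distr_eq[OF Y_meas[OF i] t_meas] by simp
  have "(\<integral>\<omega>. \<psi> (Y i \<omega>) (Eta i \<omega>) \<partial>M) = integral\<^sup>L (distr M (borel \<Otimes>\<^sub>M N) (\<lambda>\<omega>. (Y i \<omega>, Eta i \<omega>))) (\<lambda>(y, e). \<psi> y e)"
    by (subst integral_distr[OF XY psi_meas]) simp
  also have "\<dots> = integral\<^sup>L (distr M borel (Y i) \<Otimes>\<^sub>M Q) (\<lambda>(y, e). \<psi> y e)"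
    using distr_pair[OF i] by simp
  also have "\<dots> = (\<integral>y. t y \<partial>distr M borel (Y i))"
    using PQ.integral_fst[OF int] teq by simp
  also have "\<dots> = (\<integral>\<omega>. t (Y i \<omega>) \<partial>M)"
    by (rule integral_distr[OF Y_meas[OF i] t_meas])
  finally show "(\<integral>\<omega>. \<psi> (Y i \<omega>) (Eta i \<omega>) \<partial>M) = (\<integral>\<omega>. t (Y i \<omega>) \<partial>M)" .
qed


lemma psi_meas'[measurable]:
  "f \<in> measurable K borel \<Longrightarrow> g \<in> measurable K N \<Longrightarrow> (\<lambda>x. \<psi> (f x) (g x)) \<in> borel_measurable K"
  using measurable_compose[OF measurable_Pair psi_meas] by simp

lemma t_meas'[measurable]: "f \<in> measurable K borel \<Longrightarrow> (\<lambda>x. t (f x)) \<in> borel_measurable K"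
  using measurable_compose[OF _ t_meas] by blast

lemma sets_Q[measurable_cong]: "sets Q = sets N"
  using Eta_distr[OF n] by auto

lemma Ym[measurable]: "i < n \<Longrightarrow> Y i \<in> borel_measurable M" by (rule Y_meas)
lemma Etam[measurable]: "i < n \<Longrightarrow> Eta i \<in> measurable M N" by (rule Eta_meas)

lemma subg_W:
  assumes i: "i < n" and sy: "subgaussian M (\<lambda>\<omega>. t (Y i \<omega>)) sy"
    and se: "\<And>y. subgaussian Q (\<psi> y) se"
  shows "integrable M (\<lambda>\<omega>. exp (l * (\<psi> (Y i \<omega>) (Eta i \<omega>) - (\<integral>w. t (Y i w) \<partial>M))))
    \<and> (\<integral>\<omega>. exp (l * (\<psi> (Y i \<omega>) (Eta i \<omega>) - (\<integral>w. t (Y i w) \<partial>M))) \<partial>M) \<le> exp ((sy\<^sup>2 + se\<^sup>2) * l\<^sup>2 / 2)"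
proof -
  define \<mu> where "\<mu> = (\<integral>w. t (Y i w) \<partial>M)"
  interpret Qp: prob_space Q by (rule Q_prob)
  have Q1: "(\<integral>\<^sup>+e. ennreal (exp (l * (\<psi> y e - t y))) \<partial>Q) \<le> ennreal (exp (se\<^sup>2 * l\<^sup>2 / 2))" for y
  proof -
    have "integrable Q (\<lambda>e. exp (l * (\<psi> y e - t y))) \<and> (\<integral>e. exp (l * (\<psi> y e - t y)) \<partial>Q) \<le> exp (se\<^sup>2 * l\<^sup>2 / 2)"
      using se[of y] unbiased[of y] unfolding subgaussian_def by auto
    then show ?thesis
      by (subst nn_integral_eq_integral) auto
  qed
  have M1: "integrable M (\<lambda>\<omega>. exp (l * (t (Y i \<omega>) - \<mu>))) \<and> (\<integral>\<omega>. exp (l * (t (Y i \<omega>) - \<mu>)) \<partial>M) \<le> exp (sy\<^sup>2 * l\<^sup>2 / 2)"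
    using sy unfolding subgaussian_def \<mu>_def by auto
  have "(\<integral>\<^sup>+\<omega>. ennreal (exp (l * (\<psi> (Y i \<omega>) (Eta i \<omega>) - \<mu>))) \<partial>M)
      = (\<integral>\<^sup>+y. \<integral>\<^sup>+e. ennreal (exp (l * (\<psi> y e - \<mu>))) \<partial>Q \<partial>distr M borel (Y i))"
    using nn_pair[OF i, of "\<lambda>(y,e). ennreal (exp (l * (\<psi> y e - \<mu>)))"] by simp
  also have "\<dots> = (\<integral>\<^sup>+y. ennreal (exp (l * (t y - \<mu>))) * (\<integral>\<^sup>+e. ennreal (exp (l * (\<psi> y e - t y))) \<partial>Q) \<partial>distr M borel (Y i))"
  proof (rule nn_integral_cong)
    fix y
    have "(\<integral>\<^sup>+e. ennreal (exp (l * (\<psi> y e - \<mu>))) \<partial>Q) = (\<integral>\<^sup>+e. ennreal (exp (l * (t y - \<mu>))) * ennreal (exp (l * (\<psi> y e - t y))) \<partial>Q)"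
      by (rule nn_integral_cong) (simp add: ennreal_mult[symmetric] exp_add[symmetric] algebra_simps)
    also have "\<dots> = ennreal (exp (l * (t y - \<mu>))) * (\<integral>\<^sup>+e. ennreal (exp (l * (\<psi> y e - t y))) \<partial>Q)"
      by (rule nn_integral_cmult) measurable
    finally show "(\<integral>\<^sup>+e. ennreal (exp (l * (\<psi> y e - \<mu>))) \<partial>Q) = ennreal (exp (l * (t y - \<mu>))) * (\<integral>\<^sup>+e. ennreal (exp (l * (\<psi> y e - t y))) \<partial>Q)" .
  qed
  also have "\<dots> \<le> (\<integral>\<^sup>+y. ennreal (exp (l * (t y - \<mu>))) * ennreal (exp (se\<^sup>2 * l\<^sup>2 / 2)) \<partial>distr M borel (Y i))"
    by (intro nn_integral_mono mult_left_mono Q1) auto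
  also have "\<dots> = (\<integral>\<^sup>+\<omega>. ennreal (exp (l * (t (Y i \<omega>) - \<mu>))) * ennreal (exp (se\<^sup>2 * l\<^sup>2 / 2)) \<partial>M)"
    by (rule nn_integral_distr) (use i in simp_all)
  also have "\<dots> = (\<integral>\<^sup>+\<omega>. ennreal (exp (l * (t (Y i \<omega>) - \<mu>))) \<partial>M) * ennreal (exp (se\<^sup>2 * l\<^sup>2 / 2))"
    by (rule nn_integral_multc) (use i in simp)
  also have "\<dots> = ennreal (\<integral>\<omega>. exp (l * (t (Y i \<omega>) - \<mu>)) \<partial>M) * ennreal (exp (se\<^sup>2 * l\<^sup>2 / 2))"
    using M1 by (subst nn_integral_eq_integral) auto
  also have "\<dots> \<le> ennreal (exp (sy\<^sup>2 * l\<^sup>2 / 2)) * ennreal (exp (se\<^sup>2 * l\<^sup>2 / 2))"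
    using M1 by (intro mult_right_mono ennreal_leI) auto
  also have "\<dots> = ennreal (exp ((sy\<^sup>2 + se\<^sup>2) * l\<^sup>2 / 2))"
    by (simp add: ennreal_mult[symmetric] exp_add[symmetric] algebra_simps add_divide_distrib)
  finally have le: "(\<integral>\<^sup>+\<omega>. ennreal (exp (l * (\<psi> (Y i \<omega>) (Eta i \<omega>) - \<mu>))) \<partial>M) \<le> ennreal (exp ((sy\<^sup>2 + se\<^sup>2) * l\<^sup>2 / 2))" .
  have int: "integrable M (\<lambda>\<omega>. exp (l * (\<psi> (Y i \<omega>) (Eta i \<omega>) - \<mu>)))"
    by (rule integrableI_nonneg) (use i le in \<open>auto intro: le_less_trans\<close>)
  have "ennreal (\<integral>\<omega>. exp (l * (\<psi> (Y i \<omega>) (Eta i \<omega>) - \<mu>)) \<partial>M) \<le> ennreal (exp ((sy\<^sup>2 + se\<^sup>2) * l\<^sup>2 / 2))"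
    using le int by (subst (asm) nn_integral_eq_integral) auto
  then have "(\<integral>\<omega>. exp (l * (\<psi> (Y i \<omega>) (Eta i \<omega>) - \<mu>)) \<partial>M) \<le> exp ((sy\<^sup>2 + se\<^sup>2) * l\<^sup>2 / 2)"
    by (subst (asm) ennreal_le_iff) auto
  with int show ?thesis unfolding \<mu>_def by simp
qed


lemma var_W:
  assumes i: "i < n" and sy: "variance_le M (\<lambda>\<omega>. t (Y i \<omega>)) sy"
    and se: "\<And>y. variance_le Q (\<psi> y) se"
  shows "integrable M (\<lambda>\<omega>. (\<psi> (Y i \<omega>) (Eta i \<omega>) - (\<integral>w. t (Y i w) \<partial>M))\<^sup>2)
    \<and> (\<integral>\<omega>. (\<psi> (Y i \<omega>) (Eta i \<omega>) - (\<integral>w. t (Y i w) \<partial>M))\<^sup>2 \<partial>M) \<le> sy\<^sup>2 + se\<^sup>2"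
proof -
  define \<mu> where "\<mu> = (\<integral>w. t (Y i w) \<partial>M)"
  interpret Qp: prob_space Q by (rule Q_prob)
  have Q1: "(\<integral>\<^sup>+e. ennreal ((\<psi> y e - \<mu>)\<^sup>2) \<partial>Q) \<le> ennreal (se\<^sup>2 + (t y - \<mu>)\<^sup>2)" for y
  proof -
    have v: "integrable Q (\<psi> y)" "integrable Q (\<lambda>e. (\<psi> y e)\<^sup>2)" "(\<integral>e. (\<psi> y e - t y)\<^sup>2 \<partial>Q) \<le> se\<^sup>2"
      using se[of y] unbiased[of y] unfolding variance_le_def by auto
    have i1: "integrable Q (\<lambda>e. (\<psi> y e - c)\<^sup>2)" for c
      using v(1,2) by (rule int_sq_shift) (rule Qp.finite_measure_axioms)
    have "(\<integral>e. (\<psi> y e - \<mu>)\<^sup>2 \<partial>Q) = (\<integral>e. (\<psi> y e - t y)\<^sup>2 + (2 * (t y - \<mu>)) * (\<psi> y e - t y) + (t y - \<mu>)\<^sup>2 \<partial>Q)"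
      by (rule Bochner_Integration.integral_cong) (auto simp: power2_eq_square algebra_simps)
    also have "\<dots> = (\<integral>e. (\<psi> y e - t y)\<^sup>2 \<partial>Q) + (2 * (t y - \<mu>)) * ((\<integral>e. \<psi> y e \<partial>Q) - t y) + (t y - \<mu>)\<^sup>2"
      using v i1 by (simp add: Qp.prob_space)
    also have "\<dots> \<le> se\<^sup>2 + (t y - \<mu>)\<^sup>2" using v unbiased[of y] by simp
    finally have le: "(\<integral>e. (\<psi> y e - \<mu>)\<^sup>2 \<partial>Q) \<le> se\<^sup>2 + (t y - \<mu>)\<^sup>2" .
    show ?thesis
    proof -
      have "(\<integral>\<^sup>+e. ennreal ((\<psi> y e - \<mu>)\<^sup>2) \<partial>Q) = ennreal (\<integral>e. (\<psi> y e - \<mu>)\<^sup>2 \<partial>Q)"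
        using i1[of \<mu>] by (subst nn_integral_eq_integral) auto
      also have "\<dots> \<le> ennreal (se\<^sup>2 + (t y - \<mu>)\<^sup>2)" using le by (rule ennreal_leI)
      finally show ?thesis .
    qed
  qed
  have vy: "integrable M (\<lambda>\<omega>. t (Y i \<omega>))" "integrable M (\<lambda>\<omega>. (t (Y i \<omega>))\<^sup>2)"
      "(\<integral>\<omega>. (t (Y i \<omega>) - \<mu>)\<^sup>2 \<partial>M) \<le> sy\<^sup>2"
    using sy unfolding variance_le_def \<mu>_def by auto
  have iy: "integrable M (\<lambda>\<omega>. (t (Y i \<omega>) - \<mu>)\<^sup>2)"
    using vy(1,2) by (rule int_sq_shift) (rule finite_measure_axioms)
  have "(\<integral>\<^sup>+\<omega>. ennreal ((\<psi> (Y i \<omega>) (Eta i \<omega>) - \<mu>)\<^sup>2) \<partial>M)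
      = (\<integral>\<^sup>+y. \<integral>\<^sup>+e. ennreal ((\<psi> y e - \<mu>)\<^sup>2) \<partial>Q \<partial>distr M borel (Y i))"
    using nn_pair[OF i, of "\<lambda>(y,e). ennreal ((\<psi> y e - \<mu>)\<^sup>2)"] by simp
  also have "\<dots> \<le> (\<integral>\<^sup>+y. ennreal (se\<^sup>2 + (t y - \<mu>)\<^sup>2) \<partial>distr M borel (Y i))"
    by (intro nn_integral_mono Q1)
  also have "\<dots> = (\<integral>\<^sup>+\<omega>. ennreal (se\<^sup>2 + (t (Y i \<omega>) - \<mu>)\<^sup>2) \<partial>M)"
    by (rule nn_integral_distr) (use i in simp_all)
  also have "\<dots> = ennreal (\<integral>\<omega>. se\<^sup>2 + (t (Y i \<omega>) - \<mu>)\<^sup>2 \<partial>M)"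
    using iy by (subst nn_integral_eq_integral) auto
  also have "\<dots> \<le> ennreal (sy\<^sup>2 + se\<^sup>2)"
    using iy vy(3) by (intro ennreal_leI) (simp add: prob_space)
  finally have le: "(\<integral>\<^sup>+\<omega>. ennreal ((\<psi> (Y i \<omega>) (Eta i \<omega>) - \<mu>)\<^sup>2) \<partial>M) \<le> ennreal (sy\<^sup>2 + se\<^sup>2)" .
  have int: "integrable M (\<lambda>\<omega>. (\<psi> (Y i \<omega>) (Eta i \<omega>) - \<mu>)\<^sup>2)"
    by (rule integrableI_nonneg) (use i le in \<open>auto intro: le_less_trans\<close>)
  have "ennreal (\<integral>\<omega>. (\<psi> (Y i \<omega>) (Eta i \<omega>) - \<mu>)\<^sup>2 \<partial>M) \<le> ennreal (sy\<^sup>2 + se\<^sup>2)"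
    using le int by (subst (asm) nn_integral_eq_integral) auto
  then have "(\<integral>\<omega>. (\<psi> (Y i \<omega>) (Eta i \<omega>) - \<mu>)\<^sup>2 \<partial>M) \<le> sy\<^sup>2 + se\<^sup>2"
    by (subst (asm) ennreal_le_iff) auto
  with int show ?thesis unfolding \<mu>_def by simp
qed

end



context prob_space begin

lemma G1:
  fixes W :: "nat \<Rightarrow> 'a \<Rightarrow> real"
  assumes fin: "finite I" and ind: "indep_vars (\<lambda>_. borel) W I"
    and mgf: "\<And>i l. i \<in> I \<Longrightarrow> integrable M (\<lambda>\<omega>. exp (l * W i \<omega>)) \<and> (\<integral>\<omega>. exp (l * W i \<omega>) \<partial>M) \<le> exp (v * l\<^sup>2 / 2)"
    and v: "v \<ge> 0" and a: "\<And>i. i \<in> I \<Longrightarrow> \<bar>a i\<bar> \<le> c"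
  shows "integrable M (\<lambda>\<omega>. exp (l * (\<Sum>i\<in>I. a i * W i \<omega>)))
     \<and> (\<integral>\<omega>. exp (l * (\<Sum>i\<in>I. a i * W i \<omega>)) \<partial>M) \<le> exp (v * c\<^sup>2 * real (card I) * l\<^sup>2 / 2)"
proof -
  let ?X = "\<lambda>i \<omega>. exp ((l * a i) * W i \<omega>)"
  have eq: "(\<lambda>\<omega>. exp (l * (\<Sum>i\<in>I. a i * W i \<omega>))) = (\<lambda>\<omega>. \<Prod>i\<in>I. ?X i \<omega>)"
    by (auto simp: sum_distrib_left exp_sum[OF fin] mult.assoc)
  have indX: "indep_vars (\<lambda>_. borel) ?X I"
    by (rule indep_vars_compose2[OF ind]) auto
  have intX: "\<And>i. i \<in> I \<Longrightarrow> integrable M (?X i)" using mgf by blast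
  have int: "integrable M (\<lambda>\<omega>. \<Prod>i\<in>I. ?X i \<omega>)"
    by (rule indep_vars_integrable[OF fin indX intX])
  have "(\<integral>\<omega>. (\<Prod>i\<in>I. ?X i \<omega>) \<partial>M) = (\<Prod>i\<in>I. \<integral>\<omega>. ?X i \<omega> \<partial>M)"
    by (rule indep_vars_lebesgue_integral[OF fin indX intX])
  also have "\<dots> \<le> (\<Prod>i\<in>I. exp (v * (l * a i)\<^sup>2 / 2))"
    by (intro prod_mono conjI integral_nonneg_AE) (use mgf in auto)
  also have "\<dots> = exp (\<Sum>i\<in>I. v * (l * a i)\<^sup>2 / 2)" by (simp add: exp_sum[OF fin])
  also have "\<dots> \<le> exp (v * c\<^sup>2 * real (card I) * l\<^sup>2 / 2)"
  proof -
    have "(\<Sum>i\<in>I. v * (l * a i)\<^sup>2 / 2) \<le> (\<Sum>i\<in>I. v * c\<^sup>2 * l\<^sup>2 / 2)"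
    proof (rule sum_mono)
      fix i assume "i \<in> I"
      then have "(a i)\<^sup>2 \<le> c\<^sup>2" using a[of i] by (metis abs_le_square_iff abs_abs abs_ge_self order_trans abs_le_D1 abs_of_nonneg power2_abs abs_le_square_iff)
      then have "v * (a i)\<^sup>2 * l\<^sup>2 \<le> v * c\<^sup>2 * l\<^sup>2"
        using v by (intro mult_right_mono mult_left_mono) auto
      then show "v * (l * a i)\<^sup>2 / 2 \<le> v * c\<^sup>2 * l\<^sup>2 / 2" by (simp add: power_mult_distrib algebra_simps)
    qed
    also have "\<dots> = v * c\<^sup>2 * real (card I) * l\<^sup>2 / 2" by simp
    finally show ?thesis by simp
  qed
  finally show ?thesis using int eq by simp
qed

lemma G2:
  fixes Z :: "'a \<Rightarrow> real"
  assumes Zm: "Z \<in> borel_measurable M"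
    and mgf: "\<And>l. integrable M (\<lambda>\<omega>. exp (l * Z \<omega>)) \<and> (\<integral>\<omega>. exp (l * Z \<omega>) \<partial>M) \<le> exp (v * l\<^sup>2 / 2)"
    and v: "v > 0" and s: "s > 0"
  shows "prob {\<omega> \<in> space M. Z \<omega> \<ge> s} \<le> exp (- s\<^sup>2 / (2 * v))"
proof -
  define l where "l = s / v"
  have l: "l > 0" using v s by (simp add: l_def)
  have "{\<omega> \<in> space M. Z \<omega> \<ge> s} = {\<omega> \<in> space M. exp (l * Z \<omega>) \<ge> exp (l * s)}"
    using l by auto
  also have "prob \<dots> \<le> (\<integral>\<omega>. exp (l * Z \<omega>) \<partial>M) / exp (l * s)"
    by (rule integral_Markov_inequality_measure) (use mgf Zm in auto)
  also have "\<dots> \<le> exp (v * l\<^sup>2 / 2) / exp (l * s)"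
    using mgf by (intro divide_right_mono) auto
  also have "\<dots> = exp (v * l\<^sup>2 / 2 - l * s)" by (simp add: exp_diff)
  also have "v * l\<^sup>2 / 2 - l * s = - s\<^sup>2 / (2 * v)"
    using v by (simp add: l_def power2_eq_square field_simps)
  finally show ?thesis .
qed

lemma G3:
  fixes Z :: "'a \<Rightarrow> real"
  assumes Zm: "Z \<in> borel_measurable M"
    and mgf: "\<And>l. integrable M (\<lambda>\<omega>. exp (l * Z \<omega>)) \<and> (\<integral>\<omega>. exp (l * Z \<omega>) \<partial>M) \<le> 1"
  shows "AE \<omega> in M. Z \<omega> = 0"
proof -
  let ?u = "\<lambda>\<omega>. exp (1 * Z \<omega>) + exp ((-1) * Z \<omega>) - 2"
  have equ: "?u \<omega> = (exp (Z \<omega> / 2) - exp (- Z \<omega> / 2))\<^sup>2" for \<omega>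
    by (simp add: power2_diff exp_minus field_simps power2_eq_square exp_add[symmetric])
  have int: "integrable M ?u" using mgf[of 1] mgf[of "-1"] by auto
  have nn: "AE \<omega> in M. 0 \<le> ?u \<omega>" unfolding equ by auto
  have "integral\<^sup>L M ?u \<le> 0"
    using mgf[of 1] mgf[of "-1"] by (simp add: prob_space)
  moreover have "integral\<^sup>L M ?u \<ge> 0" using nn by (rule integral_nonneg_AE)
  ultimately have "integral\<^sup>L M ?u = 0" by simp
  then have "AE \<omega> in M. ?u \<omega> = 0" using integral_nonneg_eq_0_iff_AE[OF int nn] by simp
  then show ?thesis
  proof (rule AE_mp, intro AE_I2 impI)
    fix \<omega> assume "?u \<omega> = 0"
    then have "exp (Z \<omega> / 2) = exp (- Z \<omega> / 2)" unfolding equ by simp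
    then show "Z \<omega> = 0" by simp
  qed
qed

lemma G4:
  fixes Z :: "'j \<Rightarrow> 'a \<Rightarrow> real"
  assumes J: "finite J" "J \<noteq> {}" and Zm: "\<And>j. j \<in> J \<Longrightarrow> Z j \<in> borel_measurable M"
    and b: "\<And>j. j \<in> J \<Longrightarrow> prob {\<omega> \<in> space M. \<bar>Z j \<omega>\<bar> > s} \<le> \<delta> / real (card J)"
  shows "prob {\<omega> \<in> space M. \<forall>j\<in>J. \<bar>Z j \<omega>\<bar> \<le> s} \<ge> 1 - \<delta>"
proof -
  let ?A = "\<lambda>j. {\<omega> \<in> space M. \<bar>Z j \<omega>\<bar> > s}"
  have ev: "?A j \<in> events" if "j \<in> J" for j using Zm[OF that] by measurable
  have eq: "{\<omega> \<in> space M. \<forall>j\<in>J. \<bar>Z j \<omega>\<bar> \<le> s} = space M - (\<Union>j\<in>J. ?A j)" by auto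
  have "prob (\<Union>j\<in>J. ?A j) \<le> (\<Sum>j\<in>J. prob (?A j))"
    by (rule finite_measure_subadditive_finite) (use J ev in auto)
  also have "\<dots> \<le> (\<Sum>j\<in>J. \<delta> / real (card J))" by (rule sum_mono) (rule b)
  also have "\<dots> = \<delta>" using J by simp
  finally have "prob (\<Union>j\<in>J. ?A j) \<le> \<delta>" .
  moreover have "prob (space M - (\<Union>j\<in>J. ?A j)) = 1 - prob (\<Union>j\<in>J. ?A j)"
    by (rule prob_compl) (use J ev in auto)
  ultimately show ?thesis unfolding eq by simp
qed


lemma G5:
  fixes Z :: "'a \<Rightarrow> real"
  assumes Zm: "Z \<in> borel_measurable M" and ae: "AE \<omega> in M. Z \<omega> = 0" and s: "s \<ge> 0"
  shows "prob {\<omega> \<in> space M. \<bar>Z \<omega>\<bar> > s} = 0"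
proof -
  have "emeasure M {\<omega> \<in> space M. \<bar>Z \<omega>\<bar> > s} = 0"
  proof (rule AE_iff_measurable[THEN iffD1])
    show "{\<omega> \<in> space M. \<bar>Z \<omega>\<bar> > s} \<in> sets M" using Zm by measurable
    show "{\<omega> \<in> space M. \<not> \<not> \<bar>Z \<omega>\<bar> > s} = {\<omega> \<in> space M. \<bar>Z \<omega>\<bar> > s}" by simp
    show "AE \<omega> in M. \<not> \<bar>Z \<omega>\<bar> > s" using ae by (rule AE_mp) (use s in auto)
  qed
  then show ?thesis by (simp add: measure_def)
qed

lemma G6:
  fixes Z :: "'a \<Rightarrow> real"
  assumes Zm: "Z \<in> borel_measurable M" and int: "integrable M (\<lambda>\<omega>. (Z \<omega>)\<^sup>2)" and s: "s > 0"
  shows "prob {\<omega> \<in> space M. \<bar>Z \<omega>\<bar> > s} \<le> (\<integral>\<omega>. (Z \<omega>)\<^sup>2 \<partial>M) / s\<^sup>2"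
proof -
  have "{\<omega> \<in> space M. \<bar>Z \<omega>\<bar> > s} \<subseteq> {\<omega> \<in> space M. (Z \<omega>)\<^sup>2 \<ge> s\<^sup>2}"
    using s by (auto simp: abs_le_square_iff[symmetric] intro: less_imp_le)
  then have "prob {\<omega> \<in> space M. \<bar>Z \<omega>\<bar> > s} \<le> prob {\<omega> \<in> space M. (Z \<omega>)\<^sup>2 \<ge> s\<^sup>2}"
    by (intro finite_measure_mono) (use Zm in measurable)
  also have "\<dots> \<le> (\<integral>\<omega>. (Z \<omega>)\<^sup>2 \<partial>M) / s\<^sup>2"
    by (rule integral_Markov_inequality_measure) (use int s Zm in auto)
  finally show ?thesis .
qed

lemma G7:
  fixes Z :: "'a \<Rightarrow> real"
  assumes Zm: "Z \<in> borel_measurable M" and int: "integrable M (\<lambda>\<omega>. (Z \<omega>)\<^sup>2)" and le: "(\<integral>\<omega>. (Z \<omega>)\<^sup>2 \<partial>M) \<le> 0"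
  shows "AE \<omega> in M. Z \<omega> = 0"
proof -
  have "(\<integral>\<omega>. (Z \<omega>)\<^sup>2 \<partial>M) = 0" using le integral_nonneg_AE[of "\<lambda>\<omega>. (Z \<omega>)\<^sup>2" M] by (simp add: antisym)
  then have "AE \<omega> in M. (Z \<omega>)\<^sup>2 = 0" using integral_nonneg_eq_0_iff_AE[OF int] by simp
  then show ?thesis by auto
qed

end



lemma int_aff:
  fixes g :: "nat \<Rightarrow> 'a \<Rightarrow> real"
  assumes "prob_space M" "\<And>i. i < n \<Longrightarrow> integrable M (g i)"
  shows "(\<integral>\<omega>. c * (\<Sum>i<n. - g i \<omega> * P i + C i) \<partial>M) = c * (\<Sum>i<n. - (\<integral>\<omega>. g i \<omega> \<partial>M) * P i + C i)"
proof -
  interpret prob_space M by fact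
  have "(\<integral>\<omega>. c * (\<Sum>i<n. - g i \<omega> * P i + C i) \<partial>M) = c * (\<integral>\<omega>. (\<Sum>i<n. - g i \<omega> * P i + C i) \<partial>M)"
    by simp
  also have "(\<integral>\<omega>. (\<Sum>i<n. - g i \<omega> * P i + C i) \<partial>M) = (\<Sum>i<n. \<integral>\<omega>. - g i \<omega> * P i + C i \<partial>M)"
    by (rule Bochner_Integration.integral_sum) (use assms in auto)
  also have "\<dots> = (\<Sum>i<n. - (\<integral>\<omega>. g i \<omega> \<partial>M) * P i + C i)"
    by (rule sum.cong) (use assms in \<open>auto simp: prob_space\<close>)
  finally show ?thesis .
qed

locale full9 = setup9 +
  fixes \<phi> :: "nat \<Rightarrow> real \<Rightarrow> real" and q p :: nat and x :: "nat \<Rightarrow> nat \<Rightarrow> real" and B :: real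
  assumes p: "p > 0" and q: "q > 0"
    and bnd: "\<And>i k l. i < n \<Longrightarrow> k < q \<Longrightarrow> l < p \<Longrightarrow> \<bar>\<phi> k (x i l)\<bar> \<le> B"
begin

definition "\<mu> i = (\<integral>w. t (Y i w) \<partial>M)"
definition "W i \<omega> = \<psi> (Y i \<omega>) (Eta i \<omega>) - \<mu> i"
definition "a j i = - basis_fun \<phi> j (x i) / real n"
definition "Z j \<omega> = (\<Sum>i<n. a j i * W i \<omega>)"
definition "J = {..<q} \<times> {..<p}"

lemma J: "finite J" "J \<noteq> {}" "card J = q * p" using p q by (auto simp: J_def)

lemma B0: "B \<ge> 0" using bnd[of 0 0 0] n p q by auto

lemma a_bnd: "j \<in> J \<Longrightarrow> \<bar>a j i\<bar> \<le> B / real n" if "i < n" for i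
  using bnd[OF that, of "fst j" "snd j"] n
  by (auto simp: a_def basis_fun_def J_def divide_right_mono)

lemma W_meas[measurable]: "i < n \<Longrightarrow> W i \<in> borel_measurable M"
  unfolding W_def by measurable

lemma Z_meas[measurable]: "Z j \<in> borel_measurable M"
  unfolding Z_def by (intro borel_measurable_sum borel_measurable_times) auto

lemma W_int: "i < n \<Longrightarrow> integrable M (W i)"
  unfolding W_def using psi_int by (auto simp: prob_space)

lemma W_mean: "i < n \<Longrightarrow> (\<integral>\<omega>. W i \<omega> \<partial>M) = 0"
  unfolding W_def using psi_int mean_eq by (auto simp: prob_space \<mu>_def)

lemma W_indep: "indep_vars (\<lambda>_. borel) W {..<n}"
proof -
  have "indep_vars (\<lambda>_. borel) (\<lambda>i \<omega>. (\<lambda>x. x - \<mu> i) (\<psi> (Y i \<omega>) (Eta i \<omega>))) {..<n}"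
    by (rule indep_vars_compose2[OF indep_pairs[OF psi_meas]]) auto
  then show ?thesis by (simp add: W_def[abs_def])
qed

lemma int_eta: "(\<integral>w. Lhat_eta t \<psi> \<phi> q p n x Y Eta \<nu> w \<partial>M) = 1 / real n * (\<Sum>i<n. - \<mu> i * predictor \<phi> q p \<nu> (x i) + logZ t (predictor \<phi> q p \<nu> (x i)))"
proof -
  have "(\<integral>w. Lhat_eta t \<psi> \<phi> q p n x Y Eta \<nu> w \<partial>M) = 1 / real n * (\<Sum>i<n. - (\<integral>\<omega>. \<psi> (Y i \<omega>) (Eta i \<omega>) \<partial>M) * predictor \<phi> q p \<nu> (x i) + logZ t (predictor \<phi> q p \<nu> (x i)))"
    unfolding Lhat_eta_def
    by (rule int_aff[where g="\<lambda>i \<omega>. \<psi> (Y i \<omega>) (Eta i \<omega>)"]) (use psi_int prob_space_axioms in auto)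
  then show ?thesis using mean_eq(2) by (simp add: \<mu>_def)
qed

lemma part_i: "(\<integral>\<omega>. Lhat_eta t \<psi> \<phi> q p n x Y Eta \<nu> \<omega> \<partial>M) = (\<integral>\<omega>. Lhat t \<phi> q p n x Y \<nu> \<omega> \<partial>M)"
proof -
  have "(\<integral>w. Lhat t \<phi> q p n x Y \<nu> w \<partial>M) = 1 / real n * (\<Sum>i<n. - (\<integral>\<omega>. t (Y i \<omega>) \<partial>M) * predictor \<phi> q p \<nu> (x i) + logZ t (predictor \<phi> q p \<nu> (x i)))"
    unfolding Lhat_def
    by (rule int_aff[where g="\<lambda>i \<omega>. t (Y i \<omega>)"]) (use mean_eq(1) prob_space_axioms in auto)
  then show ?thesis using int_eta by (simp add: \<mu>_def)
qed

lemma decomp: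
  assumes \<omega>: "\<omega> \<in> space M"
  shows "Lhat_eta t \<psi> \<phi> q p n x Y Eta \<nu> \<omega> - (\<integral>w. Lhat_eta t \<psi> \<phi> q p n x Y Eta \<nu> w \<partial>M) = (\<Sum>j\<in>J. \<nu> j * Z j \<omega>)"
proof -
  let ?P = "\<lambda>i. predictor \<phi> q p \<nu> (x i)" and ?C = "\<lambda>i. logZ t (predictor \<phi> q p \<nu> (x i))"
  have "Lhat_eta t \<psi> \<phi> q p n x Y Eta \<nu> \<omega> - (\<integral>w. Lhat_eta t \<psi> \<phi> q p n x Y Eta \<nu> w \<partial>M)
     = 1 / real n * ((\<Sum>i<n. - \<psi> (Y i \<omega>) (Eta i \<omega>) * ?P i + ?C i) - (\<Sum>i<n. - \<mu> i * ?P i + ?C i))"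
    unfolding int_eta by (simp add: Lhat_eta_def right_diff_distrib)
  also have "(\<Sum>i<n. - \<psi> (Y i \<omega>) (Eta i \<omega>) * ?P i + ?C i) - (\<Sum>i<n. - \<mu> i * ?P i + ?C i)
      = (\<Sum>i<n. - W i \<omega> * ?P i)"
    unfolding sum_subtractf[symmetric] by (rule sum.cong) (auto simp: W_def algebra_simps)
  finally have "Lhat_eta t \<psi> \<phi> q p n x Y Eta \<nu> \<omega> - (\<integral>w. Lhat_eta t \<psi> \<phi> q p n x Y Eta \<nu> w \<partial>M)
     = 1 / real n * (\<Sum>i<n. - W i \<omega> * predictor \<phi> q p \<nu> (x i))" .
  also have "\<dots> = (\<Sum>i<n. \<Sum>j\<in>J. \<nu> j * (a j i * W i \<omega>))"
    unfolding predictor_def a_def J_def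
    by (simp add: sum_distrib_left sum_distrib_right sum_negf[symmetric] algebra_simps)
  also have "\<dots> = (\<Sum>j\<in>J. \<nu> j * Z j \<omega>)"
    unfolding Z_def by (subst sum.swap) (simp add: sum_distrib_left)
  finally show ?thesis .
qed

lemma set_eq:
  assumes s: "s \<ge> 0"
  shows "{\<omega> \<in> space M. \<forall>\<nu>. \<bar>Lhat_eta t \<psi> \<phi> q p n x Y Eta \<nu> \<omega> - (\<integral>w. Lhat_eta t \<psi> \<phi> q p n x Y Eta \<nu> w \<partial>M)\<bar> \<le> s * pred_norm q p \<nu>}
     = {\<omega> \<in> space M. \<forall>j\<in>J. \<bar>Z j \<omega>\<bar> \<le> s}"
proof (intro set_eqI iffI)
  fix \<omega> assume "\<omega> \<in> {\<omega> \<in> space M. \<forall>\<nu>. \<bar>Lhat_eta t \<psi> \<phi> q p n x Y Eta \<nu> \<omega> - (\<integral>w. Lhat_eta t \<psi> \<phi> q p n x Y Eta \<nu> w \<partial>M)\<bar> \<le> s * pred_norm q p \<nu>}"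
  then have \<omega>: "\<omega> \<in> space M" and h: "\<And>\<nu>. \<bar>\<Sum>j\<in>J. \<nu> j * Z j \<omega>\<bar> \<le> s * pred_norm q p \<nu>"
    using decomp by auto
  have "\<bar>Z j \<omega>\<bar> \<le> s" if j: "j \<in> J" for j
  proof -
    have "(\<Sum>k\<in>J. (if k = j then 1 else 0) * Z k \<omega>) = (\<Sum>k\<in>J. if k = j then Z k \<omega> else 0)"
      by (rule sum.cong) auto
    also have "\<dots> = Z j \<omega>" using j J by (simp add: sum.delta)
    finally have "(\<Sum>k\<in>J. (if k = j then 1 else 0) * Z k \<omega>) = Z j \<omega>" .
    moreover have "pred_norm q p (\<lambda>k. if k = j then 1 else 0) = 1"
      using j J unfolding pred_norm_def J_def[symmetric] by (simp add: if_distrib sum.delta cong: if_cong)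
    ultimately show ?thesis using h[of "\<lambda>k. if k = j then 1 else 0"] by simp
  qed
  then show "\<omega> \<in> {\<omega> \<in> space M. \<forall>j\<in>J. \<bar>Z j \<omega>\<bar> \<le> s}" using \<omega> by auto
next
  fix \<omega> assume "\<omega> \<in> {\<omega> \<in> space M. \<forall>j\<in>J. \<bar>Z j \<omega>\<bar> \<le> s}"
  then have \<omega>: "\<omega> \<in> space M" and h: "\<And>j. j \<in> J \<Longrightarrow> \<bar>Z j \<omega>\<bar> \<le> s" by auto
  have "\<bar>\<Sum>j\<in>J. \<nu> j * Z j \<omega>\<bar> \<le> s * pred_norm q p \<nu>" for \<nu>
  proof -
    have "\<bar>\<Sum>j\<in>J. \<nu> j * Z j \<omega>\<bar> \<le> (\<Sum>j\<in>J. \<bar>\<nu> j\<bar> * s)"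
      by (rule order_trans[OF sum_abs sum_mono]) (auto simp: abs_mult intro: mult_left_mono h)
    also have "\<dots> = s * pred_norm q p \<nu>" by (simp add: pred_norm_def J_def sum_distrib_left mult.commute)
    finally show ?thesis .
  qed
  then show "\<omega> \<in> {\<omega> \<in> space M. \<forall>\<nu>. \<bar>Lhat_eta t \<psi> \<phi> q p n x Y Eta \<nu> \<omega> - (\<integral>w. Lhat_eta t \<psi> \<phi> q p n x Y Eta \<nu> w \<partial>M)\<bar> \<le> s * pred_norm q p \<nu>}"
    using \<omega> decomp by auto
qed


lemma Z_mgf:
  assumes sy: "\<forall>i<n. subgaussian M (\<lambda>\<omega>. t (Y i \<omega>)) sy" and se: "\<forall>y. subgaussian Q (\<psi> y) se"
    and j: "j \<in> J" and sg: "sg = 1 \<or> sg = -1"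
  shows "integrable M (\<lambda>\<omega>. exp (l * (sg * Z j \<omega>))) \<and> (\<integral>\<omega>. exp (l * (sg * Z j \<omega>)) \<partial>M)
     \<le> exp ((sy\<^sup>2 + se\<^sup>2) * (B / real n)\<^sup>2 * real n * l\<^sup>2 / 2)"
proof -
  have "integrable M (\<lambda>\<omega>. exp (l * (\<Sum>i\<in>{..<n}. (sg * a j i) * W i \<omega>)))
     \<and> (\<integral>\<omega>. exp (l * (\<Sum>i\<in>{..<n}. (sg * a j i) * W i \<omega>)) \<partial>M) \<le> exp ((sy\<^sup>2 + se\<^sup>2) * (B / real n)\<^sup>2 * real (card {..<n}) * l\<^sup>2 / 2)"
  proof (rule G1[OF _ W_indep])
    show "\<bar>sg * a j i\<bar> \<le> B / real n" if "i \<in> {..<n}" for i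
      using a_bnd[OF _ j, of i] that sg by (auto simp: abs_mult)
    show "integrable M (\<lambda>\<omega>. exp (l * W i \<omega>)) \<and> (\<integral>\<omega>. exp (l * W i \<omega>) \<partial>M) \<le> exp ((sy\<^sup>2 + se\<^sup>2) * l\<^sup>2 / 2)"
      if "i \<in> {..<n}" for i l
      using subg_W[of i sy se l] that sy se unfolding W_def \<mu>_def by auto
  qed auto
  moreover have "(\<Sum>i\<in>{..<n}. (sg * a j i) * W i \<omega>) = sg * Z j \<omega>" for \<omega>
    unfolding Z_def by (simp add: sum_distrib_left mult.assoc)
  ultimately show ?thesis by simp
qed

lemma part_ii:
  assumes sy: "\<forall>i<n. subgaussian M (\<lambda>\<omega>. t (Y i \<omega>)) sy" and se: "\<forall>y. subgaussian Q (\<psi> y) se"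
    and d: "0 < \<delta>" "\<delta> < 1"
  shows "measure M {\<omega> \<in> space M. \<forall>\<nu>.
           \<bar>Lhat_eta t \<psi> \<phi> q p n x Y Eta \<nu> \<omega> - (\<integral>w. Lhat_eta t \<psi> \<phi> q p n x Y Eta \<nu> w \<partial>M)\<bar>
             \<le> sqrt (sy\<^sup>2 + se\<^sup>2) * B
                * sqrt (2 / real n * (ln (real p) + ln (real q) + ln (2 / \<delta>))) * pred_norm q p \<nu>}
          \<ge> 1 - \<delta>"
proof -
  define v where "v = sy\<^sup>2 + se\<^sup>2"
  define L where "L = ln (real p) + ln (real q) + ln (2 / \<delta>)"
  define s where "s = sqrt v * B * sqrt (2 / real n * L)"
  define V where "V = v * (B / real n)\<^sup>2 * real n"
  have v0: "v \<ge> 0" unfolding v_def by simp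
  have L0: "L > 0" unfolding L_def using p q d by (auto intro!: add_nonneg_pos)
  have s0: "s \<ge> 0" unfolding s_def using v0 L0 B0 n by auto
  have V0: "V \<ge> 0" unfolding V_def using v0 by simp
  have main: "prob {\<omega> \<in> space M. \<bar>Z j \<omega>\<bar> > s} \<le> \<delta> / real (card J)" if j: "j \<in> J" for j
  proof (cases "V = 0")
    case True
    have "AE \<omega> in M. Z j \<omega> = 0"
      by (rule G3) (use Z_mgf[OF sy se j, of 1] True in \<open>auto simp: V_def v_def\<close>)
    then have "prob {\<omega> \<in> space M. \<bar>Z j \<omega>\<bar> > s} = 0" by (rule G5[OF Z_meas _ s0])
    then show ?thesis using d by simp
  next
    case False
    then have Vp: "V > 0" using V0 by simp
    then have vp: "v > 0" and Bp: "B > 0" unfolding V_def using v0 B0 n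
      by (auto simp: zero_less_mult_iff)
    have sp: "s > 0" unfolding s_def using vp Bp L0 n by auto
    have s2: "s\<^sup>2 / (2 * V) = L"
      unfolding s_def V_def using vp Bp L0 n
      by (simp add: power_mult_distrib real_sqrt_pow2 field_simps power2_eq_square)
    have b1: "prob {\<omega> \<in> space M. sg * Z j \<omega> \<ge> s} \<le> exp (- L)" if sg: "sg = 1 \<or> sg = -1" for sg
    proof -
      have "prob {\<omega> \<in> space M. sg * Z j \<omega> \<ge> s} \<le> exp (- s\<^sup>2 / (2 * V))"
        by (rule G2[OF _ _ Vp sp]) (use Z_mgf[OF sy se j sg] in \<open>auto simp: V_def v_def\<close>)
      then show ?thesis using s2 by simp
    qed
    have "{\<omega> \<in> space M. \<bar>Z j \<omega>\<bar> > s} \<subseteq> {\<omega> \<in> space M. 1 * Z j \<omega> \<ge> s} \<union> {\<omega> \<in> space M. -1 * Z j \<omega> \<ge> s}"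
      by auto
    then have "prob {\<omega> \<in> space M. \<bar>Z j \<omega>\<bar> > s} \<le> prob ({\<omega> \<in> space M. 1 * Z j \<omega> \<ge> s} \<union> {\<omega> \<in> space M. -1 * Z j \<omega> \<ge> s})"
      by (intro finite_measure_mono) measurable
    also have "\<dots> \<le> prob {\<omega> \<in> space M. 1 * Z j \<omega> \<ge> s} + prob {\<omega> \<in> space M. -1 * Z j \<omega> \<ge> s}"
      by (rule measure_Un_le) measurable
    also have "\<dots> \<le> exp (- L) + exp (- L)" using b1[of 1] b1[of "-1"] by simp
    also have "exp (- L) = \<delta> / (2 * real (card J))"
    proof -
      have "exp L = real p * real q * (2 / \<delta>)" unfolding L_def using p q d by (simp add: exp_add)
      then show ?thesis using p q d J by (simp add: exp_minus field_simps)
    qed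
    finally show ?thesis by simp
  qed
  have "prob {\<omega> \<in> space M. \<forall>j\<in>J. \<bar>Z j \<omega>\<bar> \<le> s} \<ge> 1 - \<delta>"
    by (rule G4[OF J(1,2) Z_meas main])
  then show ?thesis using set_eq[OF s0] unfolding s_def v_def L_def by simp
qed


lemma WW:
  assumes sy: "\<forall>i<n. variance_le M (\<lambda>\<omega>. t (Y i \<omega>)) sy" and se: "\<forall>y. variance_le Q (\<psi> y) se"
    and i: "i < n" and k: "k < n"
  shows "integrable M (\<lambda>\<omega>. W i \<omega> * W k \<omega>) \<and>
    (\<integral>\<omega>. W i \<omega> * W k \<omega> \<partial>M) \<le> (if i = k then sy\<^sup>2 + se\<^sup>2 else 0) \<and>
    (i \<noteq> k \<longrightarrow> (\<integral>\<omega>. W i \<omega> * W k \<omega> \<partial>M) = 0)"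
proof (cases "i = k")
  case True
  have "integrable M (\<lambda>\<omega>. (W i \<omega>)\<^sup>2) \<and> (\<integral>\<omega>. (W i \<omega>)\<^sup>2 \<partial>M) \<le> sy\<^sup>2 + se\<^sup>2"
    using var_W[OF i, of sy se] sy se i unfolding W_def \<mu>_def by auto
  then show ?thesis using True by (simp add: power2_eq_square)
next
  case False
  have ind: "indep_vars (\<lambda>_. borel) W {i, k}"
    by (rule indep_vars_subset[OF W_indep]) (use i k in auto)
  have int: "\<And>m. m \<in> {i, k} \<Longrightarrow> integrable M (W m)" using W_int i k by auto
  have e: "(\<lambda>\<omega>. \<Prod>m\<in>{i, k}. W m \<omega>) = (\<lambda>\<omega>. W i \<omega> * W k \<omega>)" using False by auto
  have "integrable M (\<lambda>\<omega>. \<Prod>m\<in>{i, k}. W m \<omega>)" by (rule indep_vars_integrable[OF _ ind int]) simp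
  moreover have "(\<integral>\<omega>. (\<Prod>m\<in>{i, k}. W m \<omega>) \<partial>M) = (\<Prod>m\<in>{i, k}. \<integral>\<omega>. W m \<omega> \<partial>M)"
    by (rule indep_vars_lebesgue_integral[OF _ ind int]) simp
  ultimately show ?thesis using False e W_mean[OF i] by simp
qed

lemma Z_sq:
  assumes sy: "\<forall>i<n. variance_le M (\<lambda>\<omega>. t (Y i \<omega>)) sy" and se: "\<forall>y. variance_le Q (\<psi> y) se"
    and j: "j \<in> J"
  shows "integrable M (\<lambda>\<omega>. (Z j \<omega>)\<^sup>2) \<and> (\<integral>\<omega>. (Z j \<omega>)\<^sup>2 \<partial>M) \<le> (sy\<^sup>2 + se\<^sup>2) * B\<^sup>2 / real n"
proof -
  have eq: "(\<lambda>\<omega>. (Z j \<omega>)\<^sup>2) = (\<lambda>\<omega>. \<Sum>i<n. \<Sum>k<n. (a j i * a j k) * (W i \<omega> * W k \<omega>))"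
    unfolding Z_def by (auto simp: power2_eq_square sum_product algebra_simps)
  have int: "integrable M (\<lambda>\<omega>. \<Sum>i<n. \<Sum>k<n. (a j i * a j k) * (W i \<omega> * W k \<omega>))"
    using WW[OF sy se] by (intro Bochner_Integration.integrable_sum integrable_mult_right) auto
  have "(\<integral>\<omega>. (\<Sum>i<n. \<Sum>k<n. (a j i * a j k) * (W i \<omega> * W k \<omega>)) \<partial>M)
      = (\<Sum>i<n. \<Sum>k<n. (a j i * a j k) * (\<integral>\<omega>. W i \<omega> * W k \<omega> \<partial>M))"
  proof -
    have ik: "integrable M (\<lambda>\<omega>. (a j i * a j k) * (W i \<omega> * W k \<omega>))" if "i < n" "k < n" for i k
      using WW[OF sy se that] by auto
    have "(\<integral>\<omega>. (\<Sum>i<n. \<Sum>k<n. (a j i * a j k) * (W i \<omega> * W k \<omega>)) \<partial>M)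
      = (\<Sum>i<n. \<integral>\<omega>. (\<Sum>k<n. (a j i * a j k) * (W i \<omega> * W k \<omega>)) \<partial>M)"
      by (rule Bochner_Integration.integral_sum) (use ik in \<open>auto intro!: Bochner_Integration.integrable_sum\<close>)
    also have "\<dots> = (\<Sum>i<n. \<Sum>k<n. \<integral>\<omega>. (a j i * a j k) * (W i \<omega> * W k \<omega>) \<partial>M)"
      by (rule sum.cong[OF refl], rule Bochner_Integration.integral_sum) (use ik in auto)
    finally show ?thesis by simp
  qed
  also have "\<dots> = (\<Sum>i<n. (a j i)\<^sup>2 * (\<integral>\<omega>. W i \<omega> * W i \<omega> \<partial>M))"
  proof (rule sum.cong)
    fix i assume i: "i \<in> {..<n}"
    have "(\<Sum>k<n. (a j i * a j k) * (\<integral>\<omega>. W i \<omega> * W k \<omega> \<partial>M)) = (\<Sum>k<n. if k = i then (a j i)\<^sup>2 * (\<integral>\<omega>. W i \<omega> * W i \<omega> \<partial>M) else 0)"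
      by (rule sum.cong) (use WW[OF sy se] i in \<open>auto simp: power2_eq_square\<close>)
    also have "\<dots> = (a j i)\<^sup>2 * (\<integral>\<omega>. W i \<omega> * W i \<omega> \<partial>M)" using i by (simp add: sum.delta')
    finally show "(\<Sum>k<n. (a j i * a j k) * (\<integral>\<omega>. W i \<omega> * W k \<omega> \<partial>M)) = (a j i)\<^sup>2 * (\<integral>\<omega>. W i \<omega> * W i \<omega> \<partial>M)" .
  qed simp
  also have "\<dots> \<le> (\<Sum>i<n. (B / real n)\<^sup>2 * (sy\<^sup>2 + se\<^sup>2))"
  proof (rule sum_mono)
    fix i assume i: "i \<in> {..<n}"
    have a2: "(a j i)\<^sup>2 \<le> (B / real n)\<^sup>2"
    proof -
      have "\<bar>a j i\<bar> \<le> B / real n" using a_bnd[of i j] i j by auto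
      from power_mono[OF this abs_ge_zero, of 2] show ?thesis by simp
    qed
    have w: "(\<integral>\<omega>. W i \<omega> * W i \<omega> \<partial>M) \<le> sy\<^sup>2 + se\<^sup>2" "0 \<le> (\<integral>\<omega>. W i \<omega> * W i \<omega> \<partial>M)"
      using WW[OF sy se, of i i] i by auto
    show "(a j i)\<^sup>2 * (\<integral>\<omega>. W i \<omega> * W i \<omega> \<partial>M) \<le> (B / real n)\<^sup>2 * (sy\<^sup>2 + se\<^sup>2)"
      using a2 w by (intro mult_mono) auto
  qed
  also have "\<dots> = (sy\<^sup>2 + se\<^sup>2) * B\<^sup>2 / real n" using n by (simp add: power2_eq_square field_simps)
  finally show ?thesis using int eq by simp
qed

lemma part_iii:
  assumes sy: "\<forall>i<n. variance_le M (\<lambda>\<omega>. t (Y i \<omega>)) sy" and se: "\<forall>y. variance_le Q (\<psi> y) se"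
    and d: "0 < \<delta>" "\<delta> < 1"
  shows "measure M {\<omega> \<in> space M. \<forall>\<nu>.
           \<bar>Lhat_eta t \<psi> \<phi> q p n x Y Eta \<nu> \<omega> - (\<integral>w. Lhat_eta t \<psi> \<phi> q p n x Y Eta \<nu> w \<partial>M)\<bar>
             \<le> sqrt (sy\<^sup>2 + se\<^sup>2) * B * sqrt (real q * real p / (real n * \<delta>)) * pred_norm q p \<nu>}
          \<ge> 1 - \<delta>"
proof -
  define v where "v = sy\<^sup>2 + se\<^sup>2"
  define s where "s = sqrt v * B * sqrt (real q * real p / (real n * \<delta>))"
  have v0: "v \<ge> 0" unfolding v_def by simp
  have s0: "s \<ge> 0" unfolding s_def using v0 B0 n d by auto
  have main: "prob {\<omega> \<in> space M. \<bar>Z j \<omega>\<bar> > s} \<le> \<delta> / real (card J)" if j: "j \<in> J" for j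
  proof (cases "v * B\<^sup>2 = 0")
    case True
    have "AE \<omega> in M. Z j \<omega> = 0"
      by (rule G7) (use Z_sq[OF sy se j] True in \<open>auto simp: v_def\<close>)
    then have "prob {\<omega> \<in> space M. \<bar>Z j \<omega>\<bar> > s} = 0" by (rule G5[OF Z_meas _ s0])
    then show ?thesis using d by simp
  next
    case False
    then have vp: "v > 0" and Bp: "B > 0" using v0 B0 by (auto simp: less_le)
    have sp: "s > 0" unfolding s_def using vp Bp p q n d by auto
    have "prob {\<omega> \<in> space M. \<bar>Z j \<omega>\<bar> > s} \<le> (\<integral>\<omega>. (Z j \<omega>)\<^sup>2 \<partial>M) / s\<^sup>2"
      by (rule G6[OF Z_meas _ sp]) (use Z_sq[OF sy se j] in auto)
    also have "\<dots> \<le> (v * B\<^sup>2 / real n) / s\<^sup>2"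
      using Z_sq[OF sy se j] sp by (intro divide_right_mono) (auto simp: v_def)
    also have "\<dots> = \<delta> / real (card J)"
      unfolding s_def using vp Bp p q n d J
      by (simp add: power_mult_distrib real_sqrt_pow2 field_simps power2_eq_square)
    finally show ?thesis .
  qed
  have "prob {\<omega> \<in> space M. \<forall>j\<in>J. \<bar>Z j \<omega>\<bar> \<le> s} \<ge> 1 - \<delta>"
    by (rule G4[OF J(1,2) Z_meas main])
  then show ?thesis using set_eq[OF s0] unfolding s_def v_def by simp
qed

end



lemma sqrt_powr_sq: "(N::real) > 0 \<Longrightarrow> sqrt (N powr (2 * \<beta> - 1)) = N powr (\<beta> - 1/2)"
proof -
  assume N: "N > 0"
  have "N powr (2 * \<beta> - 1) = (N powr (\<beta> - 1/2))\<^sup>2"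
    using N by (simp add: power2_eq_square powr_add[symmetric])
  then show ?thesis by simp
qed

lemma rate_iii:
  fixes B :: real and p :: nat
  assumes B: "B \<ge> 0" and p: "p > 0"
  shows "\<exists>C>0. \<forall>(n'::nat) (\<delta>::real) (\<sigma>::real).
        1 \<le> n' \<longrightarrow> 0 < \<delta> \<longrightarrow> \<delta> < 1 \<longrightarrow> 0 \<le> \<sigma> \<longrightarrow>
        \<sigma> * B * sqrt (real n' powr (2 * \<beta>) * real p / (real n' * \<delta>))
          \<le> C * \<sigma> * real n' powr (\<beta> - 1/2) * sqrt (1 / \<delta>)"
proof (intro exI[of _ "(B + 1) * sqrt (real p)"] conjI allI impI)
  show "0 < (B + 1) * sqrt (real p)" using B p by auto
  fix n' :: nat and \<delta> \<sigma> :: real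
  assume n': "1 \<le> n'" and d: "0 < \<delta>" "\<delta> < 1" and s: "0 \<le> \<sigma>"
  define N where "N = real n'"
  have N: "N > 0" using n' by (simp add: N_def)
  have "N powr (2 * \<beta>) * real p / (N * \<delta>) = real p * N powr (2 * \<beta> - 1) * (1 / \<delta>)"
    using N d by (simp add: powr_diff field_simps)
  moreover have "sqrt (real p * N powr (2 * \<beta> - 1) * (1 / \<delta>)) = sqrt (real p) * N powr (\<beta> - 1/2) * sqrt (1 / \<delta>)"
    by (simp only: real_sqrt_mult sqrt_powr_sq[OF N])
  ultimately have eq: "sqrt (N powr (2 * \<beta>) * real p / (N * \<delta>)) = sqrt (real p) * N powr (\<beta> - 1/2) * sqrt (1 / \<delta>)"
    by simp
  have "\<sigma> * B * (sqrt (real p) * N powr (\<beta> - 1/2) * sqrt (1 / \<delta>)) \<le> \<sigma> * (B + 1) * (sqrt (real p) * N powr (\<beta> - 1/2) * sqrt (1 / \<delta>))"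
    using s d by (intro mult_right_mono mult_left_mono) auto
  then show "\<sigma> * B * sqrt (real n' powr (2 * \<beta>) * real p / (real n' * \<delta>))
          \<le> (B + 1) * sqrt (real p) * \<sigma> * real n' powr (\<beta> - 1/2) * sqrt (1 / \<delta>)"
    unfolding N_def[symmetric] eq by (simp add: ac_simps)
qed

lemma rate_ii:
  fixes B :: real and p :: nat
  assumes B: "B \<ge> 0" and p: "p > 0" and b: "\<beta> > 0"
  shows "\<exists>C>0. \<forall>(n'::nat) (\<delta>::real) (\<sigma>::real).
        1 \<le> n' \<longrightarrow> 0 < \<delta> \<longrightarrow> \<delta> \<le> 1/2 \<longrightarrow> 0 \<le> \<sigma> \<longrightarrow>
        \<sigma> * B * sqrt (2 / real n' * (ln (real p) + ln (exp (real n' powr (2 * \<beta>))) + ln (2 / \<delta>)))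
          \<le> C * \<sigma> * real n' powr (\<beta> - 1/2) * sqrt (ln (1 / \<delta>))"
proof -
  define A where "A = ln (real p) / ln 2 + 1 / ln 2 + 2"
  have lp: "ln (real p) \<ge> 0" using p by simp
  have l2: "ln (2::real) > 0" by simp
  have A: "A > 0" unfolding A_def using lp l2 by (intro add_nonneg_pos) auto
  show ?thesis
  proof (intro exI[of _ "(B + 1) * sqrt (2 * A)"] conjI allI impI)
    show "0 < (B + 1) * sqrt (2 * A)" using B A by auto
    fix n' :: nat and \<delta> \<sigma> :: real
    assume n': "1 \<le> n'" and d: "0 < \<delta>" "\<delta> \<le> 1/2" and s: "0 \<le> \<sigma>"
    define N where "N = real n'"
    define L where "L = ln (1 / \<delta>)"
    define E where "E = N powr (2 * \<beta>)"
    have N: "N \<ge> 1" using n' by (simp add: N_def)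
    have E: "E \<ge> 1" unfolding E_def using N b by (intro ge_one_powr_ge_zero) auto
    have "2 \<le> 1 / \<delta>" using d by (simp add: le_divide_eq)
    then have L: "L \<ge> ln 2" unfolding L_def using d by (subst ln_le_cancel_iff) auto
    have L0: "L > 0" using L l2 by linarith
    have l2d: "ln (2 / \<delta>) = ln 2 + L" unfolding L_def using d by (simp add: ln_div)
    have "1 * ln 2 \<le> E * L" using E L l2 by (intro mult_mono) auto
    then have EL: "E * L \<ge> ln 2" by simp
    have EL1: "E * L \<ge> L" using E L0 by simp
    have "E * ln 2 \<le> E * L" using E L by (intro mult_left_mono) auto
    then have EL2: "E \<le> E * L / ln 2" using l2 by (simp add: pos_le_divide_eq)
    have EL3: "ln (real p) \<le> ln (real p) / ln 2 * (E * L)"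
    proof -
      have "ln (real p) = ln (real p) / ln 2 * ln 2" using l2 by simp
      also have "\<dots> \<le> ln (real p) / ln 2 * (E * L)" using lp l2 EL by (intro mult_left_mono) auto
      finally show ?thesis .
    qed
    have Aeq: "A * (E * L) = ln (real p) / ln 2 * (E * L) + E * L / ln 2 + 2 * (E * L)"
      unfolding A_def by (simp add: distrib_right)
    have inner: "ln (real p) + E + (ln 2 + L) \<le> A * (E * L)"
      unfolding Aeq using EL EL1 EL2 EL3 by linarith
    have "2 / N * (ln (real p) + E + (ln 2 + L)) \<le> 2 / N * (A * (E * L))"
      using inner N by (intro mult_left_mono) auto
    also have "2 / N * (A * (E * L)) = (2 * A) * N powr (2 * \<beta> - 1) * L"
    proof -
      have "N powr (2 * \<beta> - 1) = E / N" using N unfolding E_def by (simp add: powr_diff)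
      then show ?thesis using N by (simp add: field_simps)
    qed
    finally have "sqrt (2 / N * (ln (real p) + E + (ln 2 + L))) \<le> sqrt ((2 * A) * N powr (2 * \<beta> - 1) * L)"
      by (rule real_sqrt_le_mono)
    also have "\<dots> = sqrt (2 * A) * N powr (\<beta> - 1/2) * sqrt L"
      using N by (simp only: real_sqrt_mult sqrt_powr_sq)
    finally have key: "sqrt (2 / N * (ln (real p) + E + (ln 2 + L))) \<le> sqrt (2 * A) * N powr (\<beta> - 1/2) * sqrt L" .
    have "\<sigma> * B * sqrt (2 / N * (ln (real p) + E + (ln 2 + L))) \<le> \<sigma> * B * (sqrt (2 * A) * N powr (\<beta> - 1/2) * sqrt L)"
      using key s B by (intro mult_left_mono) auto
    also have "\<dots> \<le> \<sigma> * (B + 1) * (sqrt (2 * A) * N powr (\<beta> - 1/2) * sqrt L)"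
      using s A L0 by (intro mult_right_mono mult_left_mono) auto
    finally show "\<sigma> * B * sqrt (2 / real n' * (ln (real p) + ln (exp (real n' powr (2 * \<beta>))) + ln (2 / \<delta>)))
          \<le> (B + 1) * sqrt (2 * A) * \<sigma> * real n' powr (\<beta> - 1/2) * sqrt (ln (1 / \<delta>))"
      unfolding N_def[symmetric] l2d E_def[symmetric] L_def[symmetric] by (simp add: ac_simps)
  qed
qed




theorem theorem9:
  fixes M :: "'a measure" and N :: "'e measure" and Q :: "'e measure"
    and n p q :: nat and B :: real
    and x :: "nat \<Rightarrow> nat \<Rightarrow> real"
    and \<phi> :: "nat \<Rightarrow> real \<Rightarrow> real"
    and Y :: "nat \<Rightarrow> 'a \<Rightarrow> real" and Eta :: "nat \<Rightarrow> 'a \<Rightarrow> 'e"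
    and t :: "real \<Rightarrow> real" and \<psi> :: "real \<Rightarrow> 'e \<Rightarrow> real"
  assumes M: "prob_space M"
    and n: "n > 0" and p: "p > 0" and q: "q > 0"
    and ortho: "orthonormal_funs \<phi> q"
    and bnd: "\<And>i k l. i < n \<Longrightarrow> k < q \<Longrightarrow> l < p \<Longrightarrow> \<bar>\<phi> k (x i l)\<bar> \<le> B"
    and Y_meas: "\<And>i. i < n \<Longrightarrow> Y i \<in> borel_measurable M"
    and Eta_meas: "\<And>i. i < n \<Longrightarrow> Eta i \<in> measurable M N"
    and t_meas: "t \<in> borel_measurable borel"
    and psi_meas: "(\<lambda>(y, e). \<psi> y e) \<in> borel_measurable (borel \<Otimes>\<^sub>M N)"
    and indep: "prob_space.indep_sets M
          (\<lambda>k. case k of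
              Inl i \<Rightarrow> {Y i -` A \<inter> space M | A. A \<in> sets borel}
            | Inr i \<Rightarrow> {Eta i -` A \<inter> space M | A. A \<in> sets N})
          ({..<n} <+> {..<n})"
    and Eta_distr: "\<And>i. i < n \<Longrightarrow> distr M N (Eta i) = Q"
    and unbiased: "\<And>y. integrable Q (\<psi> y) \<and> (\<integral>e. \<psi> y e \<partial>Q) = t y"
    and psi_int: "\<And>i. i < n \<Longrightarrow> integrable M (\<lambda>\<omega>. \<psi> (Y i \<omega>) (Eta i \<omega>))"
  shows
    "(\<forall>\<nu>. (\<integral>\<omega>. Lhat_eta t \<psi> \<phi> q p n x Y Eta \<nu> \<omega> \<partial>M) = (\<integral>\<omega>. Lhat t \<phi> q p n x Y \<nu> \<omega> \<partial>M))
     \<and>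
     (\<forall>\<sigma>y \<sigma>e \<delta>::real.
        (\<forall>i<n. subgaussian M (\<lambda>\<omega>. t (Y i \<omega>)) \<sigma>y) \<longrightarrow>
        (\<forall>y. subgaussian Q (\<psi> y) \<sigma>e) \<longrightarrow> 0 < \<delta> \<longrightarrow> \<delta> < 1 \<longrightarrow>
        measure M {\<omega> \<in> space M. \<forall>\<nu>.
           \<bar>Lhat_eta t \<psi> \<phi> q p n x Y Eta \<nu> \<omega> - (\<integral>w. Lhat_eta t \<psi> \<phi> q p n x Y Eta \<nu> w \<partial>M)\<bar>
             \<le> sqrt (\<sigma>y\<^sup>2 + \<sigma>e\<^sup>2) * B
                * sqrt (2 / real n * (ln (real p) + ln (real q) + ln (2 / \<delta>))) * pred_norm q p \<nu>}
          \<ge> 1 - \<delta>)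
     \<and>
     (\<forall>\<beta>::real. 0 < \<beta> \<longrightarrow> \<beta> < 1/2 \<longrightarrow> (\<exists>C>0. \<forall>(n'::nat) (\<delta>::real) (\<sigma>::real).
        1 \<le> n' \<longrightarrow> 0 < \<delta> \<longrightarrow> \<delta> \<le> 1/2 \<longrightarrow> 0 \<le> \<sigma> \<longrightarrow>
        \<sigma> * B * sqrt (2 / real n' * (ln (real p) + ln (exp (real n' powr (2 * \<beta>))) + ln (2 / \<delta>)))
          \<le> C * \<sigma> * real n' powr (\<beta> - 1/2) * sqrt (ln (1 / \<delta>))))
     \<and>
     (\<forall>\<sigma>y \<sigma>e \<delta>::real.
        (\<forall>i<n. variance_le M (\<lambda>\<omega>. t (Y i \<omega>)) \<sigma>y) \<longrightarrow>
        (\<forall>y. variance_le Q (\<psi> y) \<sigma>e) \<longrightarrow> 0 < \<delta> \<longrightarrow> \<delta> < 1 \<longrightarrow>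
        measure M {\<omega> \<in> space M. \<forall>\<nu>.
           \<bar>Lhat_eta t \<psi> \<phi> q p n x Y Eta \<nu> \<omega> - (\<integral>w. Lhat_eta t \<psi> \<phi> q p n x Y Eta \<nu> w \<partial>M)\<bar>
             \<le> sqrt (\<sigma>y\<^sup>2 + \<sigma>e\<^sup>2) * B * sqrt (real q * real p / (real n * \<delta>)) * pred_norm q p \<nu>}
          \<ge> 1 - \<delta>)
     \<and>
     (\<forall>\<beta>::real. 0 < \<beta> \<longrightarrow> \<beta> < 1/2 \<longrightarrow> (\<exists>C>0. \<forall>(n'::nat) (\<delta>::real) (\<sigma>::real).
        1 \<le> n' \<longrightarrow> 0 < \<delta> \<longrightarrow> \<delta> < 1 \<longrightarrow> 0 \<le> \<sigma> \<longrightarrow>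
        \<sigma> * B * sqrt (real n' powr (2 * \<beta>) * real p / (real n' * \<delta>))
          \<le> C * \<sigma> * real n' powr (\<beta> - 1/2) * sqrt (1 / \<delta>)))"
proof -
  interpret full9 M N Q n Y Eta t \<psi> \<phi> q p x B
  proof -
    interpret prob_space M by (rule M)
    show "full9 M N Q n Y Eta t \<psi> \<phi> q p x B"
      by (unfold_locales; fact assms)+
  qed
  show ?thesis
    using part_i part_ii part_iii rate_ii[OF B0 p] rate_iii[OF B0 p] by blast
qed


end
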